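(* Let $\mu$ be a probability measure on a finitely generated group $\Gamma$ inducing an irreducible and aperiodic random walk $p(x,y)=\mu(x^{-1}y)$ with spectral radius $\rho$, which satisfies a ratio limit theorem with kernel $h$ such that $Ph=hP=\rho\,h$ (matrix products). Let $R_\mu=\{y\in\Gamma: H(x,y)=H(x,e)\text{ for all }x\in\Gamma\}$. Suppose that $R_\mu$ is infinite, and let $\xi$ be its unique accumulation point in the ratio limit boundary. If $x\mapsto H(x,\xi)$ is a minimal $\rho$-harmonic function, then $g\xi=\xi$ for every $g\in\Gamma$.
   Context: Ratio limit theorem: $h(x,y)=\lim_n p^{(n)}(x,y)/p^{(n)}(e,e)\in(0,\infty)$ exists for all $x,y\in\Gamma$ ($e$ the identity); ratio limit kernel $H(x,y)=h(x,y)/h(e,y)$; by group invariance $h(gx,gy)=h(x,y)$. The ratio limit compactification is the unique (up to homeomorphism fixing $\Gamma$) compact Hausdorff space containing $\Gamma$ as discrete open dense subset to which each $H(x,\cdot)$ extends continuously (extension also denoted $H$) and whose boundary points are separated by these extensions; the left action of $\Gamma$ on itself extends to a continuous action on it. $R_\mu$ is a subgroup; if infinite, it has a unique accumulation point $\xi$ in the boundary with $H(x,y)=H(x,\xi)$ for $y\in R_\mu$. A function $f:\Gamma\to\mathbb R$ is $\rho$-harmonic if $\sum_w p(x,w)f(w)=\rho f(x)$ for all $x$; a positive $\rho$-harmonic $f$ is minimal if $f(e)=1$ and $f$ is not a convex combination of two distinct positive $\rho$-harmonic functions with value $1$ at $e$. *)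

theory Defs
  imports "HOL-Analysis.Analysis" "HOL-Algebra.Generated_Groups"
begin

definition rw_p :: "('a, 'b) monoid_scheme \<Rightarrow> ('a \<Rightarrow> real) \<Rightarrow> 'a \<Rightarrow> 'a \<Rightarrow> real" where
  "rw_p G mu x y = mu (inv\<^bsub>G\<^esub> x \<otimes>\<^bsub>G\<^esub> y)"

fun rw_pn :: "('a, 'b) monoid_scheme \<Rightarrow> ('a \<Rightarrow> real) \<Rightarrow> nat \<Rightarrow> 'a \<Rightarrow> 'a \<Rightarrow> real" where
  "rw_pn G mu 0 x y = (if x = y then 1 else 0)"
| "rw_pn G mu (Suc n) x y = (\<Sum>\<^sub>\<infinity>w\<in>carrier G. rw_p G mu x w * rw_pn G mu n w y)"

definition finitely_generated :: "('a, 'b) monoid_scheme \<Rightarrow> bool" where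
  "finitely_generated G \<longleftrightarrow> (\<exists>S. finite S \<and> S \<subseteq> carrier G \<and> generate G S = carrier G)"

definition prob_on_group :: "('a, 'b) monoid_scheme \<Rightarrow> ('a \<Rightarrow> real) \<Rightarrow> bool" where
  "prob_on_group G mu \<longleftrightarrow> (\<forall>x\<in>carrier G. mu x \<ge> 0) \<and> (mu has_sum 1) (carrier G)"

definition rw_irreducible :: "('a, 'b) monoid_scheme \<Rightarrow> ('a \<Rightarrow> real) \<Rightarrow> bool" where
  "rw_irreducible G mu \<longleftrightarrow> (\<forall>x\<in>carrier G. \<forall>y\<in>carrier G. \<exists>n. rw_pn G mu n x y > 0)"

definition rw_aperiodic :: "('a, 'b) monoid_scheme \<Rightarrow> ('a \<Rightarrow> real) \<Rightarrow> bool" where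
  "rw_aperiodic G mu \<longleftrightarrow> Gcd {n. n \<ge> 1 \<and> rw_pn G mu n \<one>\<^bsub>G\<^esub> \<one>\<^bsub>G\<^esub> > 0} = 1"

definition rw_spectral_radius :: "('a, 'b) monoid_scheme \<Rightarrow> ('a \<Rightarrow> real) \<Rightarrow> real" where
  "rw_spectral_radius G mu =
     real_of_ereal (limsup (\<lambda>n. ereal (root n (rw_pn G mu n \<one>\<^bsub>G\<^esub> \<one>\<^bsub>G\<^esub>))))"

definition rho_harmonic :: "('a, 'b) monoid_scheme \<Rightarrow> ('a \<Rightarrow> real) \<Rightarrow> real \<Rightarrow> ('a \<Rightarrow> real) \<Rightarrow> bool" where
  "rho_harmonic G mu \<rho> f \<longleftrightarrow>
     (\<forall>x\<in>carrier G. ((\<lambda>w. rw_p G mu x w * f w) has_sum (\<rho> * f x)) (carrier G))"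

definition pos_rho_harmonic :: "('a, 'b) monoid_scheme \<Rightarrow> ('a \<Rightarrow> real) \<Rightarrow> real \<Rightarrow> ('a \<Rightarrow> real) \<Rightarrow> bool" where
  "pos_rho_harmonic G mu \<rho> f \<longleftrightarrow> (\<forall>x\<in>carrier G. f x > 0) \<and> rho_harmonic G mu \<rho> f"

definition minimal_rho_harmonic :: "('a, 'b) monoid_scheme \<Rightarrow> ('a \<Rightarrow> real) \<Rightarrow> real \<Rightarrow> ('a \<Rightarrow> real) \<Rightarrow> bool" where
  "minimal_rho_harmonic G mu \<rho> f \<longleftrightarrow>
     pos_rho_harmonic G mu \<rho> f \<and> f \<one>\<^bsub>G\<^esub> = 1 \<and>
     \<not> (\<exists>f1 f2 t. pos_rho_harmonic G mu \<rho> f1 \<and> pos_rho_harmonic G mu \<rho> f2 \<and>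
           f1 \<one>\<^bsub>G\<^esub> = 1 \<and> f2 \<one>\<^bsub>G\<^esub> = 1 \<and> (\<exists>x\<in>carrier G. f1 x \<noteq> f2 x) \<and>
           0 < t \<and> t < 1 \<and> (\<forall>x\<in>carrier G. f x = t * f1 x + (1 - t) * f2 x))"

definition ratio_kernel :: "('a, 'b) monoid_scheme \<Rightarrow> ('a \<Rightarrow> 'a \<Rightarrow> real) \<Rightarrow> 'a \<Rightarrow> 'a \<Rightarrow> real" where
  "ratio_kernel G h x y = h x y / h \<one>\<^bsub>G\<^esub> y"

definition R_mu :: "('a, 'b) monoid_scheme \<Rightarrow> ('a \<Rightarrow> 'a \<Rightarrow> real) \<Rightarrow> 'a set" where
  "R_mu G h = {y\<in>carrier G. \<forall>x\<in>carrier G. ratio_kernel G h x y = ratio_kernel G h x \<one>\<^bsub>G\<^esub>}"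

text \<open>(iota, Hext) is a ratio limit compactification: the whole type 'c is a compact
  Hausdorff space containing the embedded group as a discrete open dense subset, each
  H(x,.) extends continuously to Hext x, and boundary points are separated by the Hext x.\<close>
definition ratio_limit_compactification ::
  "('a, 'b) monoid_scheme \<Rightarrow> ('a \<Rightarrow> 'a \<Rightarrow> real) \<Rightarrow> ('a \<Rightarrow> 'c::t2_space) \<Rightarrow> ('a \<Rightarrow> 'c \<Rightarrow> real) \<Rightarrow> bool" where
  "ratio_limit_compactification G h iota Hext \<longleftrightarrow>
     compact (UNIV :: 'c set) \<and>
     inj_on iota (carrier G) \<and>
     (\<forall>g\<in>carrier G. open {iota g}) \<and>
     closure (iota ` carrier G) = UNIV \<and>
     (\<forall>x\<in>carrier G. continuous_on UNIV (Hext x) \<and>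
        (\<forall>y\<in>carrier G. Hext x (iota y) = ratio_kernel G h x y)) \<and>
     (\<forall>a b. a \<notin> iota ` carrier G \<longrightarrow> b \<notin> iota ` carrier G \<longrightarrow> a \<noteq> b \<longrightarrow>
        (\<exists>x\<in>carrier G. Hext x a \<noteq> Hext x b))"

definition extends_left_action ::
  "('a, 'b) monoid_scheme \<Rightarrow> ('a \<Rightarrow> 'c::topological_space) \<Rightarrow> ('a \<Rightarrow> 'c \<Rightarrow> 'c) \<Rightarrow> bool" where
  "extends_left_action G iota act \<longleftrightarrow>
     (\<forall>g\<in>carrier G. continuous_on UNIV (act g) \<and>
        (\<forall>y\<in>carrier G. act g (iota y) = iota (g \<otimes>\<^bsub>G\<^esub> y)))"

end

theory Submission
  imports Defs
begin


lemma lmult_bij: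
  fixes G (structure)
  assumes grp: "group G" and g: "g \<in> carrier G"
  shows "bij_betw (\<lambda>v. g \<otimes>\<^bsub>G\<^esub> v) (carrier G) (carrier G)"
proof -
  interpret group G by (rule grp)
  show ?thesis unfolding bij_betw_def inj_on_def
  proof safe
    fix y assume y: "y \<in> carrier G"
    show "y \<in> (\<lambda>v. g \<otimes> v) ` carrier G"
      by (rule image_eqI[of _ _ "inv g \<otimes> y"]) (use g y in \<open>simp_all add: m_assoc[symmetric]\<close>)
  qed (use g in auto)
qed

lemma pn_shift:
  fixes G (structure)
  assumes grp: "group G" and g: "g \<in> carrier G"
  shows "x \<in> carrier G \<Longrightarrow> y \<in> carrier G \<Longrightarrow>
    rw_pn G mu n (g \<otimes>\<^bsub>G\<^esub> x) (g \<otimes>\<^bsub>G\<^esub> y) = rw_pn G mu n x y"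
proof (induction n arbitrary: x)
  case 0
  interpret group G by (rule grp)
  show ?case using 0 g by simp
next
  case (Suc n)
  interpret group G by (rule grp)
  have "rw_pn G mu (Suc n) (g \<otimes> x) (g \<otimes> y) =
     (\<Sum>\<^sub>\<infinity>v\<in>carrier G. rw_p G mu (g \<otimes> x) (g \<otimes> v) * rw_pn G mu n (g \<otimes> v) (g \<otimes> y))"
    using infsum_reindex_bij_betw[OF lmult_bij[OF grp g], of "\<lambda>w. rw_p G mu (g \<otimes> x) w * rw_pn G mu n w (g \<otimes> y)"]
    by simp
  also have "\<dots> = (\<Sum>\<^sub>\<infinity>v\<in>carrier G. rw_p G mu x v * rw_pn G mu n v y)"
  proof (rule infsum_cong)
    fix v assume v: "v \<in> carrier G"
    have "inv (g \<otimes> x) \<otimes> (g \<otimes> v) = inv x \<otimes> v"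
      using g v Suc.prems by (simp add: inv_mult_group m_assoc[symmetric]) (simp add: m_assoc)
    then show "rw_p G mu (g \<otimes> x) (g \<otimes> v) * rw_pn G mu n (g \<otimes> v) (g \<otimes> y) = rw_p G mu x v * rw_pn G mu n v y"
      using Suc.IH[OF v] Suc.prems by (simp add: rw_p_def)
  qed
  finally show ?case by simp
qed

lemma pn_nonneg:
  fixes G (structure)
  assumes grp: "group G" and prob: "prob_on_group G mu"
  shows "y \<in> carrier G \<Longrightarrow> x \<in> carrier G \<Longrightarrow> rw_pn G mu n x y \<ge> 0"
proof (induction n arbitrary: x)
  case 0 then show ?case by simp
next
  case (Suc n)
  interpret group G by (rule grp)
  show ?case
    using Suc prob by (auto simp: prob_on_group_def rw_p_def intro!: infsum_nonneg)
qed

lemma hs_ge: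
  fixes f :: "'a \<Rightarrow> real"
  assumes "(f has_sum s) A" "\<And>x. x\<in>A \<Longrightarrow> f x \<ge> 0" "B \<subseteq> A" "finite B"
  shows "sum f B \<le> s"
  using has_sum_mono'[OF has_sum_finite[OF assms(4)] assms(1) assms(3)] assms(2) by auto


lemma aux_lin:
  fixes d p F c H :: real
  assumes "d \<noteq> 0"
  shows "(1 / d) * (p * F) + (- (c / d)) * (p * H) = p * ((F - c * H) / d)"
  using assms by (simp add: field_simps)

lemma aux_dec:
  fixes d F c H :: real
  assumes "d \<noteq> 0"
  shows "F = c * H + d * ((F - c * H) / d)"
  using assms by simp

lemma main_lemma:
  fixes G (structure)
    and mu :: "'a \<Rightarrow> real"
    and h :: "'a \<Rightarrow> 'a \<Rightarrow> real"
    and iota :: "'a \<Rightarrow> 'c::t2_space"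
    and Hext :: "'a \<Rightarrow> 'c \<Rightarrow> real"
    and act :: "'a \<Rightarrow> 'c \<Rightarrow> 'c"
    and \<xi> :: 'c
  assumes grp: "group G"
    and prob: "prob_on_group G mu"
    and irred: "rw_irreducible G mu"
    and ratio_lim: "\<forall>x\<in>carrier G. \<forall>y\<in>carrier G.
        (\<lambda>n. rw_pn G mu n x y / rw_pn G mu n \<one> \<one>) \<longlonglongrightarrow> h x y"
    and h_pos: "\<forall>x\<in>carrier G. \<forall>y\<in>carrier G. h x y > 0"
    and Ph: "\<forall>x\<in>carrier G. \<forall>y\<in>carrier G.
        ((\<lambda>w. rw_p G mu x w * h w y) has_sum (rw_spectral_radius G mu * h x y)) (carrier G)"
    and hP: "\<forall>x\<in>carrier G. \<forall>y\<in>carrier G.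
        ((\<lambda>w. h x w * rw_p G mu w y) has_sum (rw_spectral_radius G mu * h x y)) (carrier G)"
    and compactif: "ratio_limit_compactification G h iota Hext"
    and action: "extends_left_action G iota act"
    and xi_acc: "\<xi> islimpt (iota ` R_mu G h)"
    and minimal: "minimal_rho_harmonic G mu (rw_spectral_radius G mu) (\<lambda>x. Hext x \<xi>)"
  shows "\<forall>g\<in>carrier G. act g \<xi> = \<xi>"
proof -
  interpret group G by (rule grp)
  define \<rho> where "\<rho> = rw_spectral_radius G mu"
  define H where "H = ratio_kernel G h"
  define R where "R = R_mu G h"
  define F where "F = (\<lambda>x. Hext x \<xi>)"
  have Hdef: "H x y = h x y / h \<one> y" for x y by (simp add: H_def ratio_kernel_def)
  have cpt: "inj_on iota (carrier G)" "\<forall>g\<in>carrier G. open {iota g}"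
     "\<forall>x\<in>carrier G. continuous_on UNIV (Hext x) \<and>
        (\<forall>y\<in>carrier G. Hext x (iota y) = H x y)"
     "\<forall>a b. a \<notin> iota ` carrier G \<longrightarrow> b \<notin> iota ` carrier G \<longrightarrow> a \<noteq> b \<longrightarrow>
        (\<exists>x\<in>carrier G. Hext x a \<noteq> Hext x b)"
    using compactif unfolding ratio_limit_compactification_def H_def by auto
  have act: "\<And>g. g\<in>carrier G \<Longrightarrow> continuous_on UNIV (act g)"
     "\<And>g y. g\<in>carrier G \<Longrightarrow> y\<in>carrier G \<Longrightarrow> act g (iota y) = iota (g \<otimes> y)"
    using action unfolding extends_left_action_def by auto
  have p_nn: "rw_p G mu x y \<ge> 0" if "x \<in> carrier G" "y \<in> carrier G" for x y
    using prob that by (auto simp: prob_on_group_def rw_p_def)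
  have hpos: "h x y > 0" if "x \<in> carrier G" "y \<in> carrier G" for x y
    using h_pos that by auto
  have h_inv: "h (g \<otimes> x) (g \<otimes> y) = h x y" if g: "g \<in> carrier G" and x: "x \<in> carrier G"
     and y: "y \<in> carrier G" for g x y
  proof -
    have "(\<lambda>n. rw_pn G mu n (g \<otimes> x) (g \<otimes> y) / rw_pn G mu n \<one> \<one>) \<longlonglongrightarrow> h (g \<otimes> x) (g \<otimes> y)"
      using ratio_lim g x y by auto
    moreover have "(\<lambda>n. rw_pn G mu n (g \<otimes> x) (g \<otimes> y) / rw_pn G mu n \<one> \<one>)
        = (\<lambda>n. rw_pn G mu n x y / rw_pn G mu n \<one> \<one>)"
      using pn_shift[OF grp g x y] by simp
    ultimately have l1: "(\<lambda>n. rw_pn G mu n x y / rw_pn G mu n \<one> \<one>) \<longlonglongrightarrow> h (g \<otimes> x) (g \<otimes> y)"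
      by simp
    have l2: "(\<lambda>n. rw_pn G mu n x y / rw_pn G mu n \<one> \<one>) \<longlonglongrightarrow> h x y"
      using ratio_lim x y by blast
    show ?thesis using l1 l2 by (rule LIMSEQ_unique)
  qed
  have R_sub: "R \<subseteq> carrier G" by (auto simp: R_def R_mu_def)
  have R_iff: "y \<in> R \<longleftrightarrow> y \<in> carrier G \<and> (\<forall>x\<in>carrier G. H x y = H x \<one>)" for y
    by (simp add: R_def R_mu_def H_def)
  have one_R: "\<one> \<in> R" by (simp add: R_iff)
  have R_h: "h x y = h x \<one> * h \<one> y / h \<one> \<one>" if "y \<in> R" "x \<in> carrier G" for x y
  proof -
    have y: "y \<in> carrier G" using that R_sub by auto
    have "h x y / h \<one> y = h x \<one> / h \<one> \<one>" using that R_iff Hdef by auto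
    then show ?thesis using hpos[OF one_closed y] hpos[OF one_closed one_closed]
      by (simp add: field_simps)
  qed
  have xi_nG: "\<xi> \<notin> iota ` carrier G"
  proof
    assume "\<xi> \<in> iota ` carrier G"
    then obtain g where g: "g \<in> carrier G" "\<xi> = iota g" by auto
    then have "open {iota g}" using cpt by auto
    then show False using xi_acc g unfolding islimpt_def by auto
  qed
  have Hext_iota: "Hext x (iota y) = H x y" if "x \<in> carrier G" "y \<in> carrier G" for x y
    using cpt(3) that by blast
  have Hext_cont: "continuous_on UNIV (Hext x)" if "x \<in> carrier G" for x
    using cpt(3) that by blast
  have xi_cl: "\<xi> \<in> closure (iota ` R)"
    using xi_acc closure_mono[of "iota ` R - {\<xi>}" "iota ` R"] unfolding islimpt_in_closure R_def
    by auto
  have const_cl: "f \<xi> = c" if fc: "continuous_on UNIV f" and fR: "\<And>y. y \<in> R \<Longrightarrow> f (iota y) = c"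
    for f :: "'c \<Rightarrow> real" and c
  proof -
    have "f ` closure (iota ` R) \<subseteq> {c}"
    proof (rule image_closure_subset)
      show "continuous_on (closure (iota ` R)) f" using continuous_on_subset[OF fc subset_UNIV] .
      show "closed {c}" by simp
      show "f ` iota ` R \<subseteq> {c}" using fR by auto
    qed
    then show ?thesis using xi_cl by auto
  qed
  have F_eq: "F x = H x \<one>" if x: "x \<in> carrier G" for x
  proof -
    have "Hext x \<xi> = H x \<one>"
    proof (rule const_cl)
      show "continuous_on UNIV (Hext x)" by (rule Hext_cont[OF x])
      fix y assume yR: "y \<in> R"
      then have y: "y \<in> carrier G" using R_sub by auto
      show "Hext x (iota y) = H x \<one>" using Hext_iota[OF x y] yR R_iff x by auto
    qed
    then show ?thesis by (simp add: F_def)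
  qed
  have F_harm: "pos_rho_harmonic G mu \<rho> F" and F1: "F \<one> = 1"
    and F_min: "\<not> (\<exists>f1 f2 t. pos_rho_harmonic G mu \<rho> f1 \<and> pos_rho_harmonic G mu \<rho> f2 \<and>
           f1 \<one> = 1 \<and> f2 \<one> = 1 \<and> (\<exists>x\<in>carrier G. f1 x \<noteq> f2 x) \<and>
           0 < t \<and> t < 1 \<and> (\<forall>x\<in>carrier G. F x = t * f1 x + (1 - t) * f2 x))"
    using minimal unfolding minimal_rho_harmonic_def F_def \<rho>_def by auto
  have F_hs: "((\<lambda>v. rw_p G mu x v * F v) has_sum (\<rho> * F x)) (carrier G)" if "x \<in> carrier G" for x
    using F_harm that unfolding pos_rho_harmonic_def rho_harmonic_def by auto
  have H_e: "H \<one> v = 1" if "v \<in> carrier G" for v using hpos[OF one_closed that] Hdef by simp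
  have Hpos: "H x v > 0" if "x \<in> carrier G" "v \<in> carrier G" for x v
    using hpos[OF that] hpos[OF one_closed that(2)] Hdef by simp
  have stepF: "w \<in> R" if yR: "y \<in> R" and w: "w \<in> carrier G" and pwy: "rw_p G mu w y > 0" for w y
  proof -
    have y: "y \<in> carrier G" using yR R_sub by auto
    have hey: "h \<one> y > 0" using hpos[OF one_closed y] .
    have hs1: "((\<lambda>v. h \<one> v * rw_p G mu v y) has_sum (\<rho> * h \<one> y)) (carrier G)"
      using hP y unfolding \<rho>_def by auto
    have "sum (\<lambda>v. h \<one> v * rw_p G mu v y) {w} \<le> \<rho> * h \<one> y"
    proof (rule hs_ge[OF hs1])
      show "0 \<le> h \<one> v * rw_p G mu v y" if "v \<in> carrier G" for v
        using hpos[OF one_closed that] p_nn[OF that y] by simp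
    qed (use w in auto)
    moreover have "h \<one> w * rw_p G mu w y > 0" using hpos[OF one_closed w] pwy by simp
    ultimately have "\<rho> * h \<one> y > 0" by simp
    then have rho_pos: "\<rho> > 0" using hey by (simp add: zero_less_mult_iff)
    define c where "c v = h \<one> v * rw_p G mu v y / (\<rho> * h \<one> y)" for v
    have c_nn: "c v \<ge> 0" if v: "v \<in> carrier G" for v
    proof -
      have "0 \<le> h \<one> v * rw_p G mu v y" using hpos[OF one_closed v] p_nn[OF v y] by simp
      moreover have "0 < \<rho> * h \<one> y" using rho_pos hey by simp
      ultimately show ?thesis unfolding c_def by (rule divide_nonneg_pos)
    qed
    have cw: "c w > 0"
    proof -
      have "0 < h \<one> w * rw_p G mu w y" using hpos[OF one_closed w] pwy by simp
      moreover have "0 < \<rho> * h \<one> y" using rho_pos hey by simp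
      ultimately show ?thesis unfolding c_def by (rule divide_pos_pos)
    qed
    have ser: "((\<lambda>v. c v * H x v) has_sum F x) (carrier G)" if x: "x \<in> carrier G" for x
    proof -
      have A: "((\<lambda>v. (1 / (\<rho> * h \<one> y)) * (h x v * rw_p G mu v y)) has_sum
              ((1 / (\<rho> * h \<one> y)) * (\<rho> * h x y))) (carrier G)"
        by (rule has_sum_cmult_right) (use hP x y in \<open>auto simp: \<rho>_def\<close>)
      have "F x = H x y" using F_eq[OF x] R_iff yR x by auto
      then have B: "(1 / (\<rho> * h \<one> y)) * (\<rho> * h x y) = F x"
        using rho_pos hey by (simp add: Hdef field_simps)
      have C: "(1 / (\<rho> * h \<one> y)) * (h x v * rw_p G mu v y) = c v * H x v" if v: "v \<in> carrier G" for v
        using hpos[OF one_closed v] rho_pos hey unfolding c_def Hdef by (simp add: field_simps)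
      have "((\<lambda>v. c v * H x v) has_sum ((1 / (\<rho> * h \<one> y)) * (\<rho> * h x y))) (carrier G)"
        using A has_sum_cong[of "carrier G" "\<lambda>v. (1 / (\<rho> * h \<one> y)) * (h x v * rw_p G mu v y)"
            "\<lambda>v. c v * H x v"] C by blast
      then show ?thesis unfolding B .
    qed
    have ser_nn: "c v * H x v \<ge> 0" if "x \<in> carrier G" "v \<in> carrier G" for x v
      using c_nn[OF that(2)] Hpos[OF that] by simp
    have key: "\<forall>x\<in>carrier G. H x w = F x"
    proof (cases "\<exists>v0\<in>carrier G - {w}. c v0 > 0")
      case False
      have cz: "c v = 0" if "v \<in> carrier G - {w}" for v
        using False c_nn that by force
      have eqc: "F x = c w * H x w" if x: "x \<in> carrier G" for x
      proof -
        have "((\<lambda>v. c v * H x v) has_sum (c w * H x w)) (carrier G)"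
          by (rule has_sum_finite_neutralI[of "{w}"]) (use w cz in auto)
        then show ?thesis using ser[OF x] has_sum_unique by blast
      qed
      have "c w = 1" using eqc[OF one_closed] F1 H_e[OF w] by simp
      then show ?thesis using eqc by simp
    next
      case True
      then obtain v0 where v0: "v0 \<in> carrier G" "v0 \<noteq> w" "c v0 > 0" by auto
      have ge2: "F x \<ge> c w * H x w + c v0 * H x v0" if x: "x \<in> carrier G" for x
      proof -
        have "sum (\<lambda>v. c v * H x v) {w, v0} \<le> F x"
          by (rule hs_ge[OF ser[OF x] ser_nn[OF x]]) (use w v0 in auto)
        then show ?thesis using v0(2) by simp
      qed
      have "1 \<ge> c w + c v0" using ge2[OF one_closed] F1 H_e[OF w] H_e[OF v0(1)] by simp
      then have cw1: "c w < 1" using v0(3) by linarith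
      have cw1': "1 - c w \<noteq> 0" using cw1 by simp
      define f1 where "f1 = (\<lambda>x. H x w)"
      define f2 where "f2 = (\<lambda>x. (F x - c w * H x w) / (1 - c w))"
      have f1_hs: "((\<lambda>v. rw_p G mu x v * f1 v) has_sum (\<rho> * f1 x)) (carrier G)" if x: "x \<in> carrier G" for x
      proof -
        have A: "((\<lambda>v. (1 / h \<one> w) * (rw_p G mu x v * h v w)) has_sum ((1 / h \<one> w) * (\<rho> * h x w))) (carrier G)"
          by (rule has_sum_cmult_right) (use Ph x w in \<open>auto simp: \<rho>_def\<close>)
        have B: "(\<lambda>v. (1 / h \<one> w) * (rw_p G mu x v * h v w)) = (\<lambda>v. rw_p G mu x v * f1 v)"
          by (rule ext) (simp add: f1_def Hdef)
        have C: "(1 / h \<one> w) * (\<rho> * h x w) = \<rho> * f1 x" by (simp add: f1_def Hdef)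
        show ?thesis using A by (simp only: B C)
      qed
      have f1_h: "pos_rho_harmonic G mu \<rho> f1"
        unfolding pos_rho_harmonic_def rho_harmonic_def
      proof (intro conjI ballI)
        fix x assume x: "x \<in> carrier G"
        show "0 < f1 x" using Hpos[OF x w] by (simp add: f1_def)
        show "((\<lambda>v. rw_p G mu x v * f1 v) has_sum (\<rho> * f1 x)) (carrier G)" by (rule f1_hs[OF x])
      qed
      have f2_hs: "((\<lambda>v. rw_p G mu x v * f2 v) has_sum (\<rho> * f2 x)) (carrier G)" if x: "x \<in> carrier G" for x
      proof -
        define a where "a = 1 / (1 - c w)"
        define b where "b = - (c w / (1 - c w))"
        have A: "((\<lambda>v. a * (rw_p G mu x v * F v) + b * (rw_p G mu x v * f1 v)) has_sum
               (a * (\<rho> * F x) + b * (\<rho> * f1 x))) (carrier G)"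
          by (intro has_sum_add has_sum_cmult_right F_hs f1_hs x)
        have B: "(\<lambda>v. a * (rw_p G mu x v * F v) + b * (rw_p G mu x v * f1 v)) = (\<lambda>v. rw_p G mu x v * f2 v)"
          unfolding a_def b_def f2_def f1_def using aux_lin[OF cw1'] by (intro ext) simp
        have C: "a * (\<rho> * F x) + b * (\<rho> * f1 x) = \<rho> * f2 x"
          unfolding a_def b_def f2_def f1_def using aux_lin[OF cw1'] by simp
        show ?thesis using A by (simp only: B C)
      qed
      have f2_pos: "f2 x > 0" if x: "x \<in> carrier G" for x
      proof -
        have "c v0 * H x v0 > 0" using v0(3) Hpos[OF x v0(1)] by simp
        then have "F x - c w * H x w > 0" using ge2[OF x] by simp
        moreover have "1 - c w > 0" using cw1 by simp
        ultimately show ?thesis unfolding f2_def by (rule divide_pos_pos)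
      qed
      have f2_h: "pos_rho_harmonic G mu \<rho> f2"
        unfolding pos_rho_harmonic_def rho_harmonic_def using f2_hs f2_pos by blast
      have f11: "f1 \<one> = 1" using H_e[OF w] by (simp add: f1_def)
      have f21: "f2 \<one> = 1" using H_e[OF w] F1 cw1' by (simp add: f2_def)
      have dec: "\<forall>x\<in>carrier G. F x = c w * f1 x + (1 - c w) * f2 x"
        unfolding f1_def f2_def using aux_dec[OF cw1'] by simp
      have nd: "\<not> (\<exists>x\<in>carrier G. f1 x \<noteq> f2 x)"
      proof
        assume "\<exists>x\<in>carrier G. f1 x \<noteq> f2 x"
        then have "pos_rho_harmonic G mu \<rho> f1 \<and> pos_rho_harmonic G mu \<rho> f2 \<and>
           f1 \<one> = 1 \<and> f2 \<one> = 1 \<and> (\<exists>x\<in>carrier G. f1 x \<noteq> f2 x) \<and>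
           0 < c w \<and> c w < 1 \<and> (\<forall>x\<in>carrier G. F x = c w * f1 x + (1 - c w) * f2 x)"
          using f1_h f2_h f11 f21 dec cw cw1 by blast
        then show False using F_min by blast
      qed
      show ?thesis
      proof
        fix x assume x: "x \<in> carrier G"
        have "f2 x = f1 x" using nd x by auto
        then have "F x = c w * f1 x + (1 - c w) * f1 x" using dec x by auto
        also have "\<dots> = f1 x" by (simp add: algebra_simps)
        finally show "H x w = F x" by (simp add: f1_def)
      qed
    qed
    show ?thesis using key w F_eq R_iff by auto
  qed
  have stepG: "x \<in> carrier G \<Longrightarrow> rw_pn G mu n x \<one> > 0 \<Longrightarrow> x \<in> R" for n x
  proof (induction n arbitrary: x)
    case 0
    then have "x = \<one>" by (simp split: if_splits)
    then show ?case using one_R by simp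
  next
    case (Suc n)
    have "\<exists>w\<in>carrier G. rw_p G mu x w * rw_pn G mu n w \<one> \<noteq> 0"
    proof (rule ccontr)
      assume nex: "\<not> (\<exists>w\<in>carrier G. rw_p G mu x w * rw_pn G mu n w \<one> \<noteq> 0)"
      have "rw_pn G mu (Suc n) x \<one> = (\<Sum>\<^sub>\<infinity>w\<in>carrier G. rw_p G mu x w * rw_pn G mu n w \<one>)"
        by (simp only: rw_pn.simps)
      also have "\<dots> = 0" by (rule infsum_0) (use nex in blast)
      finally show False using Suc.prems by simp
    qed
    then obtain w where w: "w \<in> carrier G" "rw_p G mu x w * rw_pn G mu n w \<one> \<noteq> 0" by blast
    have n1: "rw_p G mu x w \<ge> 0" "rw_pn G mu n w \<one> \<ge> 0"
      using p_nn[OF Suc.prems(1) w(1)] pn_nonneg[OF grp prob one_closed w(1)] by auto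
    have n2: "rw_p G mu x w \<noteq> 0" "rw_pn G mu n w \<one> \<noteq> 0" using w(2) by auto
    have "rw_pn G mu n w \<one> > 0" using n1(2) n2(2) by linarith
    then have wR: "w \<in> R" by (rule Suc.IH[OF w(1)])
    have "rw_p G mu x w > 0" using n1(1) n2(1) by linarith
    then show ?case by (rule stepF[OF wR Suc.prems(1)])
  qed
  have allR: "g \<in> R" if g: "g \<in> carrier G" for g
  proof -
    obtain n where "rw_pn G mu n g \<one> > 0" using irred g unfolding rw_irreducible_def by blast
    then show ?thesis by (rule stepG[OF g])
  qed
  show ?thesis
  proof
    fix g assume g: "g \<in> carrier G"
    have actnG: "act g \<xi> \<notin> iota ` carrier G"
    proof
      assume "act g \<xi> \<in> iota ` carrier G"
      then obtain z where z: "z \<in> carrier G" "act g \<xi> = iota z" by auto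
      define U where "U = act g -` {iota z} \<inter> UNIV - {iota (inv g \<otimes> z)}"
      have oz: "open {iota z}" using cpt(2) z(1) by blast
      have ov: "open (act g -` {iota z} \<inter> UNIV)"
        using act(1)[OF g] oz continuous_on_open_vimage[of UNIV "act g"] by blast
      have oU: "open U" unfolding U_def by (rule open_Diff[OF ov closed_singleton])
      have xiU: "\<xi> \<in> U" unfolding U_def using z xi_nG g by auto
      obtain q where q: "q \<in> iota ` R" "q \<in> U" "q \<noteq> \<xi>"
        using xi_acc oU xiU unfolding islimpt_def R_def by blast
      then obtain y where y: "y \<in> R" "q = iota y" by auto
      have yc: "y \<in> carrier G" using y R_sub by auto
      have "iota (g \<otimes> y) = iota z" using q(2) y act(2)[OF g yc] unfolding U_def by auto
      then have "g \<otimes> y = z" using cpt(1) g yc z(1) unfolding inj_on_def by auto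
      then have "y = inv g \<otimes> z" using g yc by (auto simp: m_assoc[symmetric])
      then show False using q(2) y unfolding U_def by auto
    qed
    have Hact: "Hext x (act g \<xi>) = Hext x \<xi>" if x: "x \<in> carrier G" for x
    proof -
      have ig: "inv g \<in> carrier G" using g by simp
      have igx: "inv g \<otimes> x \<in> carrier G" using g x by simp
      have comp: "H x (g \<otimes> y) = H x g" if yR: "y \<in> R" for y
      proof -
        have y: "y \<in> carrier G" using yR R_sub by auto
        have e1: "h x (g \<otimes> y) = h (inv g \<otimes> x) y"
          using h_inv[OF g igx y] g x by (simp add: m_assoc[symmetric])
        have e2: "h \<one> (g \<otimes> y) = h (inv g) y"
          using h_inv[OF g ig y] g by simp
        have e3: "h x g = h (inv g \<otimes> x) \<one>"
          using h_inv[OF g igx one_closed] g x by (simp add: m_assoc[symmetric])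
        have e4: "h \<one> g = h (inv g) \<one>"
          using h_inv[OF g ig one_closed] g by simp
        have p1: "h \<one> y > 0" "h \<one> \<one> > 0" "h (inv g) \<one> > 0" "h (inv g \<otimes> x) \<one> > 0"
          using hpos y ig igx by auto
        show ?thesis unfolding Hdef e1 e2 e3 e4 R_h[OF yR igx] R_h[OF yR ig]
          using p1 by (simp add: field_simps)
      qed
      have "(Hext x \<circ> act g) \<xi> = H x g"
      proof (rule const_cl)
        show "continuous_on UNIV (Hext x \<circ> act g)"
        proof (rule continuous_on_compose[OF act(1)[OF g]])
          show "continuous_on (range (act g)) (Hext x)"
            using continuous_on_subset[OF Hext_cont[OF x] subset_UNIV] .
        qed
        fix y assume yR: "y \<in> R"
        then have y: "y \<in> carrier G" using R_sub by auto
        show "(Hext x \<circ> act g) (iota y) = H x g"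
          using act(2)[OF g y] Hext_iota[OF x] g y comp[OF yR] by simp
      qed
      then show ?thesis using allR[OF g] R_iff F_eq[OF x] x unfolding F_def by auto
    qed
    show "act g \<xi> = \<xi>"
    proof (rule ccontr)
      assume ne: "act g \<xi> \<noteq> \<xi>"
      obtain x where "x \<in> carrier G" "Hext x (act g \<xi>) \<noteq> Hext x \<xi>"
        using cpt(4) actnG xi_nG ne by blast
      then show False using Hact by auto
    qed
  qed
qed


theorem proposition6p3:
  fixes G :: "('a, 'b) monoid_scheme"
    and mu :: "'a \<Rightarrow> real"
    and h :: "'a \<Rightarrow> 'a \<Rightarrow> real"
    and iota :: "'a \<Rightarrow> 'c::t2_space"
    and Hext :: "'a \<Rightarrow> 'c \<Rightarrow> real"
    and act :: "'a \<Rightarrow> 'c \<Rightarrow> 'c"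
    and \<xi> :: 'c
  assumes grp: "group G"
    and fg: "finitely_generated G"
    and prob: "prob_on_group G mu"
    and irred: "rw_irreducible G mu"
    and aper: "rw_aperiodic G mu"
    and ratio_lim: "\<forall>x\<in>carrier G. \<forall>y\<in>carrier G.
        (\<lambda>n. rw_pn G mu n x y / rw_pn G mu n \<one>\<^bsub>G\<^esub> \<one>\<^bsub>G\<^esub>) \<longlonglongrightarrow> h x y"
    and h_pos: "\<forall>x\<in>carrier G. \<forall>y\<in>carrier G. h x y > 0"
    and Ph: "\<forall>x\<in>carrier G. \<forall>y\<in>carrier G.
        ((\<lambda>w. rw_p G mu x w * h w y) has_sum (rw_spectral_radius G mu * h x y)) (carrier G)"
    and hP: "\<forall>x\<in>carrier G. \<forall>y\<in>carrier G.
        ((\<lambda>w. h x w * rw_p G mu w y) has_sum (rw_spectral_radius G mu * h x y)) (carrier G)"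
    and compactif: "ratio_limit_compactification G h iota Hext"
    and action: "extends_left_action G iota act"
    and R_inf: "infinite (R_mu G h)"
    and xi_acc: "\<xi> islimpt (iota ` R_mu G h)"
    and minimal: "minimal_rho_harmonic G mu (rw_spectral_radius G mu) (\<lambda>x. Hext x \<xi>)"
  shows "\<forall>g\<in>carrier G. act g \<xi> = \<xi>"
    by (rule main_lemma[OF grp prob irred ratio_lim h_pos Ph hP compactif action xi_acc minimal])

end
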